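(* Let $m\ge3$. Then $\mathcal{H}_2$, viewed as the subgroup of $\mathcal{H}_m$ consisting of the elements that fix every point outside rays $0$ and $1$, is at least quadratically distorted in $\mathcal{H}_m$: there exist elements $\sigma_n\in\mathcal{H}_2$ ($n\in\mathbb{N}$) and constants $c,C>0$ such that the word length of $\sigma_n$ in $\mathcal{H}_2$ is at least $cn^2$ while its word length in $\mathcal{H}_m$ is at most $Cn$ (word lengths with respect to fixed finite generating sets).
   Context: Let $\mathbb{N}=\{1,2,3,\dots\}$, $\mathbb{Z}_n$ the integers modulo $n$, $R_n=\mathbb{Z}_n\times\mathbb{N}$ (ray $i$ is $\{(i,k):k\in\mathbb{N}\}$). The Houghton group $\mathcal{H}_n$ is the group of permutations $\sigma$ of $R_n$ for which there exist $N\ge0$ and integers $t_i$ with $(i,k)\sigma=(i,k+t_i)$ for all $i\in\mathbb{Z}_n$, $k\ge N$ (right actions); $\mathcal{H}_n$ is finitely generated for $n\ge2$. Identifying $R_2$ with the union of rays $0$ and $1$ of $R_m$ embeds $\mathcal{H}_2$ in $\mathcal{H}_m$. *)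

theory Defs
  imports Complex_Main
begin

type_synonym perm_pt = "nat \<times> nat \<Rightarrow> nat \<times> nat"

text \<open>R_n = Z_n x N, with Z_n represented by {0..<n} and N = {1,2,...}.\<close>
definition rays :: "nat \<Rightarrow> (nat \<times> nat) set" where
  "rays n = {(i, k). i < n \<and> 1 \<le> k}"

text \<open>Since R_2 is literally the union of rays 0 and 1 of R_m, H_2 is a subset of H_m.\<close>
definition houghton :: "nat \<Rightarrow> perm_pt set" where
  "houghton n = {\<sigma>. bij \<sigma> \<and> (\<forall>x. x \<notin> rays n \<longrightarrow> \<sigma> x = x) \<and>
     (\<exists>N::nat. \<exists>t::nat \<Rightarrow> int. \<forall>i<n. \<forall>k\<ge>N. \<sigma> (i, k) = (i, nat (int k + t i)))}"

text \<open>Products of words (the order convention is irrelevant for word lengths).\<close>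
definition word_eval :: "perm_pt list \<Rightarrow> perm_pt" where
  "word_eval ws = foldr (\<circ>) ws id"

definition symm_gens :: "perm_pt set \<Rightarrow> perm_pt set" where
  "symm_gens S = S \<union> inv ` S"

definition generates :: "nat \<Rightarrow> perm_pt set \<Rightarrow> bool" where
  "generates n S \<longleftrightarrow> S \<subseteq> houghton n \<and>
     (\<forall>g\<in>houghton n. \<exists>ws. set ws \<subseteq> symm_gens S \<and> word_eval ws = g)"

definition word_length :: "perm_pt set \<Rightarrow> perm_pt \<Rightarrow> nat" where
  "word_length S g = (LEAST k. \<exists>ws. length ws = k \<and> set ws \<subseteq> symm_gens S \<and> word_eval ws = g)"

end

theory Submission imports Defs begin

definition lk :: "nat \<times> nat \<Rightarrow> int" where
  "lk x = (if fst x = 1 then int (snd x) else 1 - int (snd x))"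

definition Inv :: "perm_pt \<Rightarrow> ((nat\<times>nat)\<times>(nat\<times>nat)) set" where
  "Inv g = {(x,y). x \<in> rays 2 \<and> y \<in> rays 2 \<and> lk x < lk y \<and> lk (g y) < lk (g x)}"

definition good :: "perm_pt \<Rightarrow> bool" where
  "good g \<longleftrightarrow> inj g \<and> (\<forall>x\<in>rays 2. g x \<in> rays 2)"

lemma lk_inj: "x \<in> rays 2 \<Longrightarrow> y \<in> rays 2 \<Longrightarrow> lk x = lk y \<Longrightarrow> x = y"
  by (cases x; cases y; auto simp: rays_def lk_def split: if_splits)

lemma Inv_comp:
  assumes "good s" "finite (Inv f)" "finite (Inv s)"
  shows "finite (Inv (f \<circ> s)) \<and> card (Inv (f \<circ> s)) \<le> card (Inv f) + card (Inv s)"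
proof -
  let ?h = "\<lambda>(x,y). (s x, s y)"
  let ?A = "Inv (f\<circ>s) \<inter> ?h -` Inv f"
  have sub: "Inv (f \<circ> s) \<subseteq> ?A \<union> Inv s"
  proof
    fix p assume p: "p \<in> Inv (f \<circ> s)"
    obtain x y where xy: "p = (x,y)" by (cases p)
    have x: "x \<in> rays 2" "y \<in> rays 2" "lk x < lk y" "lk (f (s y)) < lk (f (s x))"
      using p xy by (auto simp: Inv_def)
    have sx: "s x \<in> rays 2" "s y \<in> rays 2" using assms(1) x by (auto simp: good_def)
    have "x \<noteq> y" using x(3) by auto
    hence "s x \<noteq> s y" using assms(1) unfolding good_def by (metis injD)
    hence "lk (s x) \<noteq> lk (s y)" using lk_inj sx by blast
    then consider "lk (s x) < lk (s y)" | "lk (s y) < lk (s x)" by linarith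
    then show "p \<in> ?A \<union> Inv s"
    proof cases
      case 1 then show ?thesis using p xy x sx by (auto simp: Inv_def)
    next
      case 2 then show ?thesis using xy x by (auto simp: Inv_def)
    qed
  qed
  have inj: "inj_on ?h ?A" using assms(1) unfolding good_def inj_def inj_on_def by auto
  have im: "?h ` ?A \<subseteq> Inv f" by auto
  have finA: "finite ?A" using inj im assms(2) finite_imageD finite_subset by metis
  have cA: "card ?A \<le> card (Inv f)" using card_inj_on_le[OF inj im assms(2)] .
  have fin: "finite (Inv (f \<circ> s))" using sub finA assms(3) finite_subset by blast
  have "card (Inv (f \<circ> s)) \<le> card (?A \<union> Inv s)" using sub finA assms(3) by (intro card_mono) auto
  also have "\<dots> \<le> card ?A + card (Inv s)" by (rule card_Un_le)
  finally show ?thesis using fin cA by linarith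
qed

lemma word_eval_Cons: "word_eval (w # ws) = w \<circ> word_eval ws" by (simp add: word_eval_def)

lemma foldr_comp: "foldr (\<circ>) xs b = foldr (\<circ>) xs id \<circ> (b :: perm_pt)"
  by (induction xs) auto

lemma word_eval_append: "word_eval (xs @ ys) = word_eval xs \<circ> word_eval ys"
  unfolding word_eval_def by (simp add: foldr_comp[of xs "foldr (\<circ>) ys id"])

lemma word_eval_rep: "word_eval (concat (replicate n w)) = word_eval w ^^ n"
  by (induction n) (auto simp: word_eval_append, simp add: word_eval_def)

lemma word_bound:
  assumes "\<forall>w\<in>set ws. good w \<and> finite (Inv w) \<and> card (Inv w) \<le> K"
  shows "good (word_eval ws) \<and> finite (Inv (word_eval ws)) \<and> card (Inv (word_eval ws)) \<le> K * length ws"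
  using assms
proof (induction ws)
  case Nil
  have "Inv (\<lambda>a. a) = {}" by (auto simp: Inv_def)
  then show ?case by (simp add: word_eval_def good_def id_def)
next
  case (Cons w ws)
  then have IH: "good (word_eval ws)" "finite (Inv (word_eval ws))" "card (Inv (word_eval ws)) \<le> K * length ws"
    and w: "good w" "finite (Inv w)" "card (Inv w) \<le> K" by auto
  have g: "good (w \<circ> word_eval ws)" using IH(1) w(1) by (auto simp: good_def inj_compose)
  have c: "finite (Inv (w \<circ> word_eval ws))" "card (Inv (w \<circ> word_eval ws)) \<le> card (Inv w) + card (Inv (word_eval ws))"
    using Inv_comp[OF IH(1) w(2) IH(2)] by auto
  have "card (Inv (w \<circ> word_eval ws)) \<le> K * length (w # ws)" using c IH w by simp
  then show ?case unfolding word_eval_Cons using g c by blast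
qed

lemma hough_good: assumes "g \<in> houghton 2" shows "good g"
proof -
  have b: "bij g" and f: "\<forall>x. x \<notin> rays 2 \<longrightarrow> g x = x" using assms by (auto simp: houghton_def)
  have "g x \<in> rays 2" if "x \<in> rays 2" for x
  proof (rule ccontr)
    assume "g x \<notin> rays 2"
    then have "g (g x) = g x" using f by blast
    then have "g x = x" using b bij_is_inj injD by metis
    then show False using that \<open>g x \<notin> rays 2\<close> by simp
  qed
  then show ?thesis using b bij_is_inj by (auto simp: good_def)
qed

lemma hough_inv_good: assumes "g \<in> houghton 2" shows "good (inv g)"
proof -
  have b: "bij g" and f: "\<forall>x. x \<notin> rays 2 \<longrightarrow> g x = x" using assms by (auto simp: houghton_def)
  have "inv g x \<in> rays 2" if "x \<in> rays 2" for x
  proof (rule ccontr)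
    assume a: "inv g x \<notin> rays 2"
    have "g (inv g x) = x" using b by (simp add: bij_is_surj surj_f_inv_f)
    then show False using f a that by metis
  qed
  then show ?thesis using b bij_imp_bij_inv bij_is_inj by (auto simp: good_def)
qed

lemma Inv_finite: assumes "g \<in> houghton 2" shows "finite (Inv g)"
proof -
  from assms obtain N t where tr: "\<forall>i<2. \<forall>k\<ge>N. g (i,k) = (i, nat (int k + t i))"
    by (auto simp: houghton_def)
  have gd: "good g" using hough_good assms .
  let ?small = "{0,1::nat} \<times> {..<N}"
  have "finite ((\<lambda>x. nat \<bar>lk (g x)\<bar>) ` ?small)" by simp
  then obtain V where V: "\<forall>x\<in>?small. nat \<bar>lk (g x)\<bar> \<le> V"
    using finite_nat_set_iff_bounded_le by auto
  define A where "A = nat \<bar>t 0\<bar> + nat \<bar>t 1\<bar>"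
  define R where "R = N + V + A + 1"
  have F: "(k < N \<and> \<bar>lk (g (i,k))\<bar> \<le> int V) \<or> (N \<le> k \<and> i = 1 \<and> lk (g (i,k)) = int k + t 1 \<and> int k + t 1 \<ge> 1)
     \<or> (N \<le> k \<and> i = 0 \<and> lk (g (i,k)) = 1 - (int k + t 0) \<and> int k + t 0 \<ge> 1)" if "(i,k) \<in> rays 2" for i k
  proof (cases "k < N")
    case True
    then have "(i,k) \<in> ?small" using that by (auto simp: rays_def)
    then have "nat \<bar>lk (g (i,k))\<bar> \<le> V" using V by blast
    then show ?thesis using True by linarith
  next
    case False
    have i: "i < 2" using that by (auto simp: rays_def)
    have e: "g (i,k) = (i, nat (int k + t i))" using tr False i by auto
    have "g (i,k) \<in> rays 2" using gd that by (auto simp: good_def)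
    then have "nat (int k + t i) \<ge> 1" using e by (auto simp: rays_def)
    then have "int k + t i \<ge> 1" by linarith
    moreover have "i = 0 \<or> i = 1" using i by auto
    ultimately show ?thesis using False e by (auto simp: lk_def)
  qed
  have "Inv g \<subseteq> ({0,1} \<times> {..<R}) \<times> ({0,1} \<times> {..<R})"
  proof
    fix p assume p: "p \<in> Inv g"
    then obtain i k j l where pe: "p = ((i,k),(j,l))" by (cases p) auto
    have r: "(i,k) \<in> rays 2" "(j,l) \<in> rays 2" and o: "lk (i,k) < lk (j,l)" "lk (g (j,l)) < lk (g (i,k))"
      using p pe by (auto simp: Inv_def)
    have ij: "i = 0 \<or> i = 1" "j = 0 \<or> j = 1" "k \<ge> 1" "l \<ge> 1" using r by (auto simp: rays_def)
    have t: "\<bar>t 0\<bar> \<le> int A" "\<bar>t 1\<bar> \<le> int A" by (auto simp: A_def)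
    have lx: "lk (i,k) = (if i = 1 then int k else 1 - int k)" "lk (j,l) = (if j = 1 then int l else 1 - int l)"
      by (simp_all add: lk_def)
    have "k < R \<and> l < R"
      using F[OF r(1)] F[OF r(2)] o ij t unfolding R_def lx
      by (auto split: if_splits)
    then show "p \<in> ({0,1} \<times> {..<R}) \<times> ({0,1} \<times> {..<R})" using pe ij by auto
  qed
  then show ?thesis by (rule finite_subset) auto
qed

lemma Inv_inv: assumes "g \<in> houghton 2" shows "finite (Inv (inv g))"
proof -
  have b: "bij g" using assms by (auto simp: houghton_def)
  have gi: "good (inv g)" using hough_inv_good assms .
  have "Inv (inv g) \<subseteq> (\<lambda>(x,y). (g y, g x)) ` Inv g"
  proof
    fix p assume p: "p \<in> Inv (inv g)"
    then obtain u v where pe: "p = (u,v)" by (cases p)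
    have h: "u \<in> rays 2" "v \<in> rays 2" "lk u < lk v" "lk (inv g v) < lk (inv g u)"
      using p pe by (auto simp: Inv_def)
    have gg: "g (inv g u) = u" "g (inv g v) = v" using b by (simp_all add: bij_is_surj surj_f_inv_f)
    have "(inv g v, inv g u) \<in> Inv g" using h gg gi by (auto simp: Inv_def good_def)
    then show "p \<in> (\<lambda>(x,y). (g y, g x)) ` Inv g" using pe gg by force
  qed
  then show ?thesis using Inv_finite[OF assms] finite_subset by blast
qed


definition rv :: "nat \<Rightarrow> perm_pt" where
  "rv N x = (if fst x = 0 \<and> 1 \<le> snd x \<and> snd x \<le> N then (0, N + 1 - snd x) else x)"

lemma rv_invol: "rv N (rv N x) = x" by (cases x) (auto simp: rv_def)

lemma rv_hough: "rv N \<in> houghton 2"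
proof -
  have b: "bij (rv N)" by (rule o_bij[of "rv N" "rv N"]) (auto simp: rv_invol)
  have f: "\<forall>x. x \<notin> rays 2 \<longrightarrow> rv N x = x" by (auto simp: rays_def rv_def)
  have "\<exists>N' t. \<forall>i<2. \<forall>k\<ge>N'. rv N (i, k) = (i, nat (int k + t i))"
    by (rule exI[of _ "N+1"], rule exI[of _ "\<lambda>_. 0"]) (auto simp: rv_def)
  then show ?thesis using b f unfolding houghton_def mem_Collect_eq by blast
qed

lemma rv_Inv: "n * n \<le> card (Inv (rv (2*n)))"
proof -
  let ?h = "\<lambda>(k::nat,l::nat). ((0::nat,k),(0::nat,l))"
  have sub: "?h ` ({n+1..2*n} \<times> {1..n}) \<subseteq> Inv (rv (2*n))"
    by (auto simp: Inv_def rays_def lk_def rv_def)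
  have inj: "inj_on ?h ({n+1..2*n} \<times> {1..n})" by (auto simp: inj_on_def)
  have "card (?h ` ({n+1..2*n} \<times> {1..n})) = n * n"
    using card_image[OF inj] by (simp add: card_cartesian_product)
  then show ?thesis using card_mono[OF Inv_finite[OF rv_hough] sub] by simp
qed

definition lz :: "nat \<Rightarrow> nat \<Rightarrow> nat \<times> nat \<Rightarrow> int" where
  "lz p q x = (if fst x = q then int (snd x) else 1 - int (snd x))"
definition fz :: "nat \<Rightarrow> nat \<Rightarrow> int \<Rightarrow> nat \<times> nat" where
  "fz p q z = (if 1 \<le> z then (q, nat z) else (p, nat (1 - z)))"
definition ls :: "nat \<Rightarrow> nat \<Rightarrow> int \<Rightarrow> perm_pt" where
  "ls p q s x = (if (fst x = p \<or> fst x = q) \<and> 1 \<le> snd x then fz p q (lz p q x + s) else x)"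

lemma ls_comp: "p \<noteq> q \<Longrightarrow> ls p q a (ls p q b x) = ls p q (a + b) x"
  by (cases x) (auto simp: ls_def fz_def lz_def)

lemma ls_0: "p \<noteq> q \<Longrightarrow> ls p q 0 x = x"
  by (cases x) (auto simp: ls_def fz_def lz_def)

lemma ls_pow: "p \<noteq> q \<Longrightarrow> (ls p q s ^^ n) = ls p q (int n * s)"
proof (induction n)
  case 0 then show ?case by (auto simp: ls_0)
next
  case (Suc n) then show ?case by (auto simp: fun_eq_iff ls_comp algebra_simps)
qed

lemma ls_hough: assumes "p \<noteq> q" "p < m" "q < m" shows "ls p q s \<in> houghton m"
proof -
  have b: "bij (ls p q s)" by (rule o_bij[where f="ls p q s" and g="ls p q (-s)"]) (auto simp: fun_eq_iff ls_comp ls_0 assms)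
  have f: "\<forall>x. x \<notin> rays m \<longrightarrow> ls p q s x = x" using assms by (auto simp: rays_def ls_def)
  define t where "t i = (if i = q then s else if i = p then - s else 0)" for i
  have "\<forall>i<m. \<forall>k\<ge>nat \<bar>s\<bar> + 1. ls p q s (i, k) = (i, nat (int k + t i))"
    using assms by (auto simp: ls_def fz_def lz_def t_def)
  then have "\<exists>N t. \<forall>i<m. \<forall>k\<ge>N. ls p q s (i, k) = (i, nat (int k + t i))" by blast
  then show ?thesis using b f unfolding houghton_def mem_Collect_eq by blast
qed

lemma rv_ls: "rv N = ls 0 1 (- int N) \<circ> ls 1 2 (- int N) \<circ> ls 0 2 (int N)"
proof
  fix x :: "nat \<times> nat"
  obtain i k where x: "x = (i,k)" by (cases x)
  show "rv N x = (ls 0 1 (- int N) \<circ> ls 1 2 (- int N) \<circ> ls 0 2 (int N)) x"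
    unfolding x by (auto simp: rv_def ls_def fz_def lz_def)
qed


lemma word_length_le: "set ws \<subseteq> symm_gens S \<Longrightarrow> word_eval ws = g \<Longrightarrow> word_length S g \<le> length ws"
  unfolding word_length_def by (rule Least_le) blast

theorem mainTheorem8:
  fixes m :: nat and S T :: "perm_pt set"
  assumes "m \<ge> 3"
    and "finite S" and "generates 2 S"
    and "finite T" and "generates m T"
  shows "\<exists>\<sigma> :: nat \<Rightarrow> perm_pt. \<exists>c C :: real. c > 0 \<and> C > 0 \<and>
    (\<forall>n\<ge>1. \<sigma> n \<in> houghton 2 \<and>
       c * real n ^ 2 \<le> real (word_length S (\<sigma> n)) \<and>
       real (word_length T (\<sigma> n)) \<le> C * real n)"
proof -
  have S2: "S \<subseteq> houghton 2" and genS: "\<forall>g\<in>houghton 2. \<exists>ws. set ws \<subseteq> symm_gens S \<and> word_eval ws = g"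
    using assms(3) by (auto simp: generates_def)
  have genT: "\<forall>g\<in>houghton m. \<exists>ws. set ws \<subseteq> symm_gens T \<and> word_eval ws = g"
    using assms(5) by (auto simp: generates_def)
  have Gg: "good g \<and> finite (Inv g)" if "g \<in> symm_gens S" for g
  proof -
    from that consider "g \<in> S" | h where "h \<in> S" "g = inv h" unfolding symm_gens_def by blast
    then show ?thesis
    proof cases
      case 1 with S2 have "g \<in> houghton 2" by blast
      then show ?thesis using hough_good Inv_finite by blast
    next
      case (2 h) with S2 have "h \<in> houghton 2" by blast
      then show ?thesis using 2 hough_inv_good Inv_inv by blast
    qed
  qed
  have "finite ((\<lambda>g. card (Inv g)) ` symm_gens S)" using assms(2) by (simp add: symm_gens_def)
  then obtain K where K: "\<forall>g\<in>symm_gens S. card (Inv g) \<le> K"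
    using finite_nat_set_iff_bounded_le by auto
  have m: "0 < m" "1 < m" "2 < m" using assms(1) by auto
  obtain w1 where w1: "set w1 \<subseteq> symm_gens T" "word_eval w1 = ls 0 1 (-1)"
    using genT ls_hough[of 0 1 m "-1"] m by auto
  obtain w2 where w2: "set w2 \<subseteq> symm_gens T" "word_eval w2 = ls 1 2 (-1)"
    using genT ls_hough[of 1 2 m "-1"] m by auto
  obtain w3 where w3: "set w3 \<subseteq> symm_gens T" "word_eval w3 = ls 0 2 1"
    using genT ls_hough[of 0 2 m 1] m by auto
  define L where "L = length w1 + length w2 + length w3"
  define \<sigma> where "\<sigma> n = rv (2*n)" for n
  define c :: real where "c = 1 / (real K + 1)"
  define C :: real where "C = 2 * real L + 1"
  have "\<sigma> n \<in> houghton 2 \<and> c * real n ^ 2 \<le> real (word_length S (\<sigma> n)) \<and>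
       real (word_length T (\<sigma> n)) \<le> C * real n" for n
  proof (intro conjI)
    show h: "\<sigma> n \<in> houghton 2" by (simp add: \<sigma>_def rv_hough)
    obtain ws0 where "set ws0 \<subseteq> symm_gens S" "word_eval ws0 = \<sigma> n" using genS h by blast
    then have "\<exists>k ws. length ws = k \<and> set ws \<subseteq> symm_gens S \<and> word_eval ws = \<sigma> n" by blast
    then obtain ws where ws: "length ws = word_length S (\<sigma> n)" "set ws \<subseteq> symm_gens S" "word_eval ws = \<sigma> n"
      unfolding word_length_def using LeastI_ex[of "\<lambda>k. \<exists>ws. length ws = k \<and> set ws \<subseteq> symm_gens S \<and> word_eval ws = \<sigma> n"]
      by blast
    have "card (Inv (\<sigma> n)) \<le> K * length ws"
      proof -
      have "\<forall>w\<in>set ws. good w \<and> finite (Inv w) \<and> card (Inv w) \<le> K" using ws(2) Gg K by blast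
      from word_bound[OF this] show ?thesis using ws(3) by simp
    qed
    then have "n * n \<le> K * word_length S (\<sigma> n)" using rv_Inv[of n] ws(1) by (simp add: \<sigma>_def)
    then have "real n * real n \<le> real K * real (word_length S (\<sigma> n))" by (metis of_nat_le_iff of_nat_mult)
    also have "\<dots> \<le> (real K + 1) * real (word_length S (\<sigma> n))" by (simp add: mult_right_mono)
    finally show "c * real n ^ 2 \<le> real (word_length S (\<sigma> n))"
      by (simp add: c_def power2_eq_square field_simps)
    let ?W = "concat (replicate (2*n) w1) @ concat (replicate (2*n) w2) @ concat (replicate (2*n) w3)"
    have "set ?W \<subseteq> symm_gens T" using w1 w2 w3 by auto
    moreover have "word_eval ?W = \<sigma> n"
    proof -
      have "word_eval ?W = (ls 0 1 (-1))^^(2*n) \<circ> (ls 1 2 (-1))^^(2*n) \<circ> (ls 0 2 1)^^(2*n)"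
        by (simp only: word_eval_append word_eval_rep w1 w2 w3 o_assoc)
      also have "\<dots> = ls 0 1 (- int (2*n)) \<circ> ls 1 2 (- int (2*n)) \<circ> ls 0 2 (int (2*n))"
        using ls_pow[of 0 1 "2*n" "-1"] ls_pow[of 1 2 "2*n" "-1"] ls_pow[of 0 2 "2*n" 1] by simp
      also have "\<dots> = \<sigma> n" by (simp only: rv_ls \<sigma>_def)
      finally show ?thesis .
    qed
    ultimately have "word_length T (\<sigma> n) \<le> length ?W" by (rule word_length_le)
    also have "length ?W = 2 * n * L" by (simp add: L_def length_concat sum_list_replicate algebra_simps)
    finally have "real (word_length T (\<sigma> n)) \<le> 2 * real n * real L" by (metis of_nat_le_iff of_nat_mult of_nat_numeral)
    also have "\<dots> \<le> C * real n" by (simp add: C_def algebra_simps)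
    finally show "real (word_length T (\<sigma> n)) \<le> C * real n" .
  qed
  moreover have "c > 0" "C > 0" by (auto simp: c_def C_def)
  ultimately show ?thesis by blast
qed

end
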